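(* Let $E_1,E_2,E_3,H_1,H_2,H_3$ be logically independent events with $H_i\ne\emptyset$. For every $(x_1,x_2,x_3)\in[0,1]^3$ the assessment $$\mathcal M=(x_1,x_2,x_3,\min\{x_1,x_2\},\min\{x_1,x_3\},\min\{x_2,x_3\},\min\{x_1,x_2,x_3\})$$ on $\mathcal F=\{\mathscr C_1,\mathscr C_2,\mathscr C_3,\mathscr C_{12},\mathscr C_{13},\mathscr C_{23},\mathscr C_{123}\}$ is coherent. Moreover, under this assessment, as random quantities $\mathscr C_{ij}=\min\{\mathscr C_i,\mathscr C_j\}$ for $i\ne j$ and $\mathscr C_{123}=\min\{\mathscr C_1,\mathscr C_2,\mathscr C_3\}$.
   Context: Events are identified with their indicators; $\bar E$ is the negation of $E$. For $H\ne\emptyset$ the conditional event $E|H$ is true if $EH$ is true, false if $\bar EH$ is true, void if $\bar H$ is true; with $P(E|H)=x$ it is identified with the random quantity $EH+x\bar H$, and a conditional random quantity $X|H$ with prevision $\mu$ with $XH+\mu\bar H$. Coherence (de Finetti): an assessment $(\mu_1,\dots,\mu_m)$ on $\{X_1|H_1,\dots,X_m|H_m\}$ is coherent iff for all real stakes $s_i$ the gain $G=\sum_is_iH_i(X_i-\mu_i)$, restricted to $H_1\vee\dots\vee H_m$, satisfies $\min G\le0\le\max G$. Logical independence: all conjunctions of the listed events or their negations are nonempty. Notation: $\mathscr C_i=E_i|H_i$, $\mathscr C_{ij}=(E_i|H_i)\wedge(E_j|H_j)$, $\mathscr C_{123}=(E_1|H_1)\wedge(E_2|H_2)\wedge(E_3|H_3)$,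 with previsions $x_i,x_{ij},x_{123}$ in the order of $\mathcal F$. Conjunction of two: $\mathscr C_{ij}$ equals $1$ if $E_iH_iE_jH_j$ true, $0$ if $\bar E_iH_i\vee\bar E_jH_j$ true, $x_i$ if $\bar H_iE_jH_j$ true, $x_j$ if $\bar H_jE_iH_i$ true, $x_{ij}$ if $\bar H_i\bar H_j$ true. $\mathscr C_{123}$ equals $1$ if $E_1H_1E_2H_2E_3H_3$ true; $0$ if $\bar E_1H_1\vee\bar E_2H_2\vee\bar E_3H_3$ true; $x_1$, $x_2$, $x_3$ if respectively $\bar H_1E_2H_2E_3H_3$, $\bar H_2E_1H_1E_3H_3$, $\bar H_3E_1H_1E_2H_2$ true; $x_{12}$, $x_{13}$, $x_{23}$ if respectively $\bar H_1\bar H_2E_3H_3$, $\bar H_1\bar H_3E_2H_2$, $\bar H_2\bar H_3E_1H_1$ true; $x_{123}$ if $\bar H_1\bar H_2\bar H_3$ true. *)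

theory Defs
  imports Complex_Main
begin

definition logically_independent :: "'w set list \<Rightarrow> bool" where
  "logically_independent As \<longleftrightarrow>
     (\<forall>bs::bool list. length bs = length As \<longrightarrow>
        \<Inter> (set (map2 (\<lambda>b A. if b then A else - A) bs As)) \<noteq> {})"

(* conditional event E|H with P(E|H)=x, identified with EH + x (not H) *)
definition cond_event :: "'w set \<Rightarrow> 'w set \<Rightarrow> real \<Rightarrow> 'w \<Rightarrow> real" where
  "cond_event E H x \<omega> = of_bool (\<omega> \<in> E \<and> \<omega> \<in> H) + x * of_bool (\<omega> \<notin> H)"

(* conjunction (E_i|H_i) /\ (E_j|H_j), given previsions x_i, x_j, x_ij *)
definition conj2 :: "'w set \<Rightarrow> 'w set \<Rightarrow> 'w set \<Rightarrow> 'w set \<Rightarrow> real \<Rightarrow> real \<Rightarrow> real \<Rightarrow> 'w \<Rightarrow> real" where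
  "conj2 Ei Hi Ej Hj xi xj xij \<omega> =
     (if \<omega> \<in> Ei \<and> \<omega> \<in> Hi \<and> \<omega> \<in> Ej \<and> \<omega> \<in> Hj then 1
      else if (\<omega> \<notin> Ei \<and> \<omega> \<in> Hi) \<or> (\<omega> \<notin> Ej \<and> \<omega> \<in> Hj) then 0
      else if \<omega> \<notin> Hi \<and> \<omega> \<in> Ej \<and> \<omega> \<in> Hj then xi
      else if \<omega> \<notin> Hj \<and> \<omega> \<in> Ei \<and> \<omega> \<in> Hi then xj
      else xij)"

(* conjunction (E_1|H_1) /\ (E_2|H_2) /\ (E_3|H_3), given previsions *)
definition conj3 :: "'w set \<Rightarrow> 'w set \<Rightarrow> 'w set \<Rightarrow> 'w set \<Rightarrow> 'w set \<Rightarrow> 'w set \<Rightarrow>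
    real \<Rightarrow> real \<Rightarrow> real \<Rightarrow> real \<Rightarrow> real \<Rightarrow> real \<Rightarrow> real \<Rightarrow> 'w \<Rightarrow> real" where
  "conj3 E1 H1 E2 H2 E3 H3 x1 x2 x3 x12 x13 x23 x123 \<omega> =
     (if \<omega> \<in> E1 \<and> \<omega> \<in> H1 \<and> \<omega> \<in> E2 \<and> \<omega> \<in> H2 \<and> \<omega> \<in> E3 \<and> \<omega> \<in> H3 then 1
      else if (\<omega> \<notin> E1 \<and> \<omega> \<in> H1) \<or> (\<omega> \<notin> E2 \<and> \<omega> \<in> H2) \<or> (\<omega> \<notin> E3 \<and> \<omega> \<in> H3) then 0
      else if \<omega> \<notin> H1 \<and> \<omega> \<in> E2 \<and> \<omega> \<in> H2 \<and> \<omega> \<in> E3 \<and> \<omega> \<in> H3 then x1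
      else if \<omega> \<notin> H2 \<and> \<omega> \<in> E1 \<and> \<omega> \<in> H1 \<and> \<omega> \<in> E3 \<and> \<omega> \<in> H3 then x2
      else if \<omega> \<notin> H3 \<and> \<omega> \<in> E1 \<and> \<omega> \<in> H1 \<and> \<omega> \<in> E2 \<and> \<omega> \<in> H2 then x3
      else if \<omega> \<notin> H1 \<and> \<omega> \<notin> H2 \<and> \<omega> \<in> E3 \<and> \<omega> \<in> H3 then x12
      else if \<omega> \<notin> H1 \<and> \<omega> \<notin> H3 \<and> \<omega> \<in> E2 \<and> \<omega> \<in> H2 then x13
      else if \<omega> \<notin> H2 \<and> \<omega> \<notin> H3 \<and> \<omega> \<in> E1 \<and> \<omega> \<in> H1 then x23
      else x123)"

(* de Finetti coherence of an assessment on a finite family X_k|H_k with previsions mu_k,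
   given as a list of triples (X_k, H_k, mu_k): for every choice of real stakes, the gain
   G = sum_k s_k H_k (X_k - mu_k), restricted to H_1 \/ ... \/ H_m, takes both a value
   <= 0 and a value >= 0 (i.e. min G <= 0 <= max G). *)
definition gain :: "(('w \<Rightarrow> real) \<times> 'w set \<times> real) list \<Rightarrow> (nat \<Rightarrow> real) \<Rightarrow> 'w \<Rightarrow> real" where
  "gain F s \<omega> = (\<Sum>k<length F. s k * of_bool (\<omega> \<in> fst (snd (F ! k))) *
                                 (fst (F ! k) \<omega> - snd (snd (F ! k))))"

definition coherent :: "(('w \<Rightarrow> real) \<times> 'w set \<times> real) list \<Rightarrow> bool" where
  "coherent F \<longleftrightarrow>
     (\<forall>s::nat \<Rightarrow> real.
        let U = (\<Union>k<length F. fst (snd (F ! k))) in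
        (\<exists>\<omega>\<in>U. gain F s \<omega> \<le> 0) \<and> (\<exists>\<omega>\<in>U. gain F s \<omega> \<ge> 0))"

end

theory Submission
  imports Defs
begin

definition gg :: "(nat \<Rightarrow> real) \<Rightarrow> real \<Rightarrow> real \<Rightarrow> real \<Rightarrow> bool \<Rightarrow> bool \<Rightarrow> bool \<Rightarrow> real" where
 "gg s x1 x2 x3 e1 e2 e3 =
   s 0 * (of_bool e1 - x1) + s 1 * (of_bool e2 - x2) + s 2 * (of_bool e3 - x3)
 + s 3 * (of_bool (e1 \<and> e2) - min x1 x2) + s 4 * (of_bool (e1 \<and> e3) - min x1 x3)
 + s 5 * (of_bool (e2 \<and> e3) - min x2 x3) + s 6 * (of_bool (e1 \<and> e2 \<and> e3) - min x1 (min x2 x3))"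

lemma avg4:
  fixes w0 w1 w2 w3 g0 g1 g2 g3 :: real
  assumes "w0 \<ge> 0" "w1 \<ge> 0" "w2 \<ge> 0" "w3 \<ge> 0" "w0+w1+w2+w3 = 1"
    "w0*g0+w1*g1+w2*g2+w3*g3 = 0" "g0 > 0" "g1 > 0" "g2 > 0" "g3 > 0"
  shows False
proof -
  have "w0*g0 \<ge> 0" "w1*g1 \<ge> 0" "w2*g2 \<ge> 0" "w3*g3 \<ge> 0" using assms by auto
  hence "w0*g0 = 0" "w1*g1 = 0" "w2*g2 = 0" "w3*g3 = 0" using assms(6) by linarith+
  hence "w0 = 0" "w1 = 0" "w2 = 0" "w3 = 0" using assms by auto
  thus False using assms(5) by simp
qed

lemma gg_neg: "\<exists>e1 e2 e3. gg s x1 x2 x3 e1 e2 e3 \<le> 0"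
  if "x1 \<in> {0..1}" "x2 \<in> {0..1}" "x3 \<in> {0..1}"
proof (rule ccontr)
  assume "\<not> ?thesis"
  hence P: "\<And>e1 e2 e3. gg s x1 x2 x3 e1 e2 e3 > 0" using not_le by blast
  consider "x1 \<le> x2" "x2 \<le> x3" | "x1 \<le> x3" "x3 \<le> x2" | "x2 \<le> x1" "x1 \<le> x3"
    | "x2 \<le> x3" "x3 \<le> x1" | "x3 \<le> x1" "x1 \<le> x2" | "x3 \<le> x2" "x2 \<le> x1" by linarith
  then show False
  proof cases
    case 1 show False
      by (rule avg4[of x1 "x2-x1" "x3-x2" "1-x3", OF _ _ _ _ _ _
          P[of True True True] P[of False True True] P[of False False True] P[of False False False]])
        (use that 1 in \<open>auto simp: gg_def min_def algebra_simps\<close>)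
  next
    case 2 show False
      by (rule avg4[of x1 "x3-x1" "x2-x3" "1-x2", OF _ _ _ _ _ _
          P[of True True True] P[of False True True] P[of False True False] P[of False False False]])
        (use that 2 in \<open>auto simp: gg_def min_def algebra_simps\<close>)
  next
    case 3 show False
      by (rule avg4[of x2 "x1-x2" "x3-x1" "1-x3", OF _ _ _ _ _ _
          P[of True True True] P[of True False True] P[of False False True] P[of False False False]])
        (use that 3 in \<open>auto simp: gg_def min_def algebra_simps\<close>)
  next
    case 4 show False
      by (rule avg4[of x2 "x3-x2" "x1-x3" "1-x1", OF _ _ _ _ _ _
          P[of True True True] P[of True False True] P[of True False False] P[of False False False]])
        (use that 4 in \<open>auto simp: gg_def min_def algebra_simps\<close>)
  next
    case 5 show False
      by (rule avg4[of x3 "x1-x3" "x2-x1" "1-x2", OF _ _ _ _ _ _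
          P[of True True True] P[of True True False] P[of False True False] P[of False False False]])
        (use that 5 in \<open>auto simp: gg_def min_def algebra_simps\<close>)
  next
    case 6 show False
      by (rule avg4[of x3 "x2-x3" "x1-x2" "1-x1", OF _ _ _ _ _ _
          P[of True True True] P[of True True False] P[of True False False] P[of False False False]])
        (use that 6 in \<open>auto simp: gg_def min_def algebra_simps\<close>)
  qed
qed

lemma gg_uminus: "gg (\<lambda>k. - s k) x1 x2 x3 e1 e2 e3 = - gg s x1 x2 x3 e1 e2 e3"
  by (simp add: gg_def algebra_simps)

lemma sum7: "(\<Sum>k<(7::nat). f k) = f 0 + f 1 + f 2 + f 3 + f 4 + f 5 + (f 6 :: real)"
  by (simp add: numeral_eq_Suc)

theorem theorem22:
  fixes E1 E2 E3 H1 H2 H3 :: "'w set" and x1 x2 x3 :: real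
  assumes indep: "logically_independent [E1, E2, E3, H1, H2, H3]"
    and H_ne: "H1 \<noteq> {}" "H2 \<noteq> {}" "H3 \<noteq> {}"
    and x_range: "x1 \<in> {0..1}" "x2 \<in> {0..1}" "x3 \<in> {0..1}"
  shows
    "let x12 = min x1 x2; x13 = min x1 x3; x23 = min x2 x3; x123 = min x1 (min x2 x3);
         C1 = cond_event E1 H1 x1; C2 = cond_event E2 H2 x2; C3 = cond_event E3 H3 x3;
         C12 = conj2 E1 H1 E2 H2 x1 x2 x12;
         C13 = conj2 E1 H1 E3 H3 x1 x3 x13;
         C23 = conj2 E2 H2 E3 H3 x2 x3 x23;
         C123 = conj3 E1 H1 E2 H2 E3 H3 x1 x2 x3 x12 x13 x23 x123
     in coherent [(C1, H1, x1), (C2, H2, x2), (C3, H3, x3),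
                  (C12, H1 \<union> H2, x12), (C13, H1 \<union> H3, x13), (C23, H2 \<union> H3, x23),
                  (C123, H1 \<union> H2 \<union> H3, x123)]
        \<and> (\<forall>\<omega>. C12 \<omega> = min (C1 \<omega>) (C2 \<omega>))
        \<and> (\<forall>\<omega>. C13 \<omega> = min (C1 \<omega>) (C3 \<omega>))
        \<and> (\<forall>\<omega>. C23 \<omega> = min (C2 \<omega>) (C3 \<omega>))
        \<and> (\<forall>\<omega>. C123 \<omega> = min (C1 \<omega>) (min (C2 \<omega>) (C3 \<omega>)))"
proof -
  define F where "F = [(cond_event E1 H1 x1, H1, x1), (cond_event E2 H2 x2, H2, x2), (cond_event E3 H3 x3, H3, x3),
                  (conj2 E1 H1 E2 H2 x1 x2 (min x1 x2), H1 \<union> H2, min x1 x2),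
                  (conj2 E1 H1 E3 H3 x1 x3 (min x1 x3), H1 \<union> H3, min x1 x3),
                  (conj2 E2 H2 E3 H3 x2 x3 (min x2 x3), H2 \<union> H3, min x2 x3),
                  (conj3 E1 H1 E2 H2 E3 H3 x1 x2 x3 (min x1 x2) (min x1 x3) (min x2 x3) (min x1 (min x2 x3)), H1 \<union> H2 \<union> H3, min x1 (min x2 x3))]"
  have wit: "\<exists>\<omega>. \<omega> \<in> H1 \<and> \<omega> \<in> H2 \<and> \<omega> \<in> H3 \<and> (\<omega> \<in> E1 \<longleftrightarrow> e1) \<and> (\<omega> \<in> E2 \<longleftrightarrow> e2) \<and> (\<omega> \<in> E3 \<longleftrightarrow> e3)" for e1 e2 e3
  proof -
    have "\<Inter> (set (map2 (\<lambda>b A. if b then A else - A) [e1,e2,e3,True,True,True] [E1, E2, E3, H1, H2, H3])) \<noteq> {}"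
      using indep unfolding logically_independent_def
      by (drule_tac x="[e1,e2,e3,True,True,True]" in spec) simp
    hence "(if e1 then E1 else - E1) \<inter> ((if e2 then E2 else - E2) \<inter> ((if e3 then E3 else - E3) \<inter> (H1 \<inter> (H2 \<inter> H3)))) \<noteq> {}"
      by simp
    then obtain \<omega> where "\<omega> \<in> (if e1 then E1 else - E1)" "\<omega> \<in> (if e2 then E2 else - E2)" "\<omega> \<in> (if e3 then E3 else - E3)"
      "\<omega> \<in> H1" "\<omega> \<in> H2" "\<omega> \<in> H3" by blast
    then show ?thesis by (intro exI[of _ \<omega>]) (cases e1; cases e2; cases e3; simp)
  qed
  have gainv: "gain F s \<omega> = gg s x1 x2 x3 e1 e2 e3"
    if "\<omega> \<in> H1" "\<omega> \<in> H2" "\<omega> \<in> H3" "\<omega> \<in> E1 \<longleftrightarrow> e1" "\<omega> \<in> E2 \<longleftrightarrow> e2" "\<omega> \<in> E3 \<longleftrightarrow> e3" for s \<omega> e1 e2 e3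
    using that unfolding gain_def F_def
    by (simp add: sum7 gg_def cond_event_def conj2_def conj3_def eval_nat_numeral)
  have coh: "coherent F"
    unfolding coherent_def Let_def
  proof (intro allI conjI)
    fix s
    have U: "(\<Union>k<length F. fst (snd (F ! k))) = H1 \<union> H2 \<union> H3"
      unfolding F_def by (auto simp: numeral_eq_Suc lessThan_Suc)
    obtain e1 e2 e3 where g1: "gg s x1 x2 x3 e1 e2 e3 \<le> 0" using gg_neg[OF x_range, of s] by (elim exE)
    obtain \<omega> where w1: "\<omega> \<in> H1 \<and> \<omega> \<in> H2 \<and> \<omega> \<in> H3 \<and> (\<omega> \<in> E1 \<longleftrightarrow> e1) \<and> (\<omega> \<in> E2 \<longleftrightarrow> e2) \<and> (\<omega> \<in> E3 \<longleftrightarrow> e3)"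
      using wit[of e1 e2 e3] by (elim exE)
    have "gain F s \<omega> \<le> 0" using g1 gainv[of \<omega> e1 e2 e3 s] w1 by simp
    moreover have "\<omega> \<in> H1 \<union> H2 \<union> H3" using w1 by simp
    ultimately show "\<exists>\<omega>\<in>\<Union>k<length F. fst (snd (F ! k)). gain F s \<omega> \<le> 0"
      unfolding U by (intro bexI)
    obtain f1 f2 f3 where g2: "gg (\<lambda>k. - s k) x1 x2 x3 f1 f2 f3 \<le> 0" using gg_neg[OF x_range, of "\<lambda>k. - s k"] by (elim exE)
    hence g2': "gg s x1 x2 x3 f1 f2 f3 \<ge> 0" by (simp add: gg_uminus)
    obtain \<omega>' where w2: "\<omega>' \<in> H1 \<and> \<omega>' \<in> H2 \<and> \<omega>' \<in> H3 \<and> (\<omega>' \<in> E1 \<longleftrightarrow> f1) \<and> (\<omega>' \<in> E2 \<longleftrightarrow> f2) \<and> (\<omega>' \<in> E3 \<longleftrightarrow> f3)"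
      using wit[of f1 f2 f3] by (elim exE)
    have "gain F s \<omega>' \<ge> 0" using g2' gainv[of \<omega>' f1 f2 f3 s] w2 by simp
    moreover have "\<omega>' \<in> H1 \<union> H2 \<union> H3" using w2 by simp
    ultimately show "\<exists>\<omega>\<in>\<Union>k<length F. fst (snd (F ! k)). gain F s \<omega> \<ge> 0"
      unfolding U by (intro bexI)
  qed
  have m12: "conj2 Ei Hi Ej Hj xi xj (min xi xj) \<omega> = min (cond_event Ei Hi xi \<omega>) (cond_event Ej Hj xj \<omega>)"
    if "xi \<in> {0..1}" "xj \<in> {0..1}" for Ei Hi Ej Hj xi xj \<omega>
    using that unfolding conj2_def cond_event_def by (auto simp: min_def)
  have m123: "conj3 E1 H1 E2 H2 E3 H3 x1 x2 x3 (min x1 x2) (min x1 x3) (min x2 x3) (min x1 (min x2 x3)) \<omega>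
     = min (cond_event E1 H1 x1 \<omega>) (min (cond_event E2 H2 x2 \<omega>) (cond_event E3 H3 x3 \<omega>))" for \<omega>
  proof -
    have a: "0 \<le> x1" "x1 \<le> 1" "0 \<le> x2" "x2 \<le> 1" "0 \<le> x3" "x3 \<le> 1" using x_range by auto
    show ?thesis unfolding conj3_def cond_event_def
      using a by (cases "\<omega> \<in> H1"; cases "\<omega> \<in> H2"; cases "\<omega> \<in> H3"; cases "\<omega> \<in> E1"; cases "\<omega> \<in> E2"; cases "\<omega> \<in> E3")
        (simp_all add: min_def)
  qed
  show ?thesis
    unfolding Let_def F_def[symmetric]
    by (intro conjI allI coh m12[OF x_range(1,2)] m12[OF x_range(1,3)] m12[OF x_range(2,3)] m123)
qed

end
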